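(* Let $G$ be a cubical $\omega$-category with connections. The family of sets $\Phi_n(G_n)$ ($n\ge0$) is closed under all face maps $\partial^\alpha_i$ and under $\varepsilon_1$ (i.e. $\partial^\alpha_i$ maps $\Phi_n(G_n)$ into $\Phi_{n-1}(G_{n-1})$ and $\varepsilon_1$ maps $\Phi_n(G_n)$ into $\Phi_{n+1}(G_{n+1})$). Each set $\Phi_n(G_n)$ is closed under $\varepsilon_i\partial^\alpha_i$ and under $\circ_i$ (whenever the composite is defined in $G_n$) for $1\le i\le n$.
   Context: A cubical $\omega$-category with connections $G$ consists of sets $G_n$ ($n\ge0$), face maps $\partial^\alpha_i:G_n\to G_{n-1}$, degeneracies $\varepsilon_i:G_{n-1}\to G_n$, connections $\Gamma^\alpha_i:G_n\to G_{n+1}$ ($1\le i\le n$, $\alpha=\pm$) and partial compositions $\circ_j$ on $G_n$ ($1\le j\le n$, $a\circ_jb$ defined iff $\partial^+_ja=\partial^-_jb$) satisfying: $\partial^\alpha_i\partial^\beta_j=\partial^\beta_{j-1}\partial^\alpha_i$ ($i<j$), $\varepsilon_i\varepsilon_j=\varepsilon_{j+1}\varepsilon_i$ ($i\le j$), $\partial^\alpha_i\varepsilon_j=\varepsilon_{j-1}\partial^\alpha_i$ ($i<j$), $\varepsilon_j\partial^\alpha_{i-1}$ ($i>j$), $\mathrm{id}$ ($i=j$); $\Gamma^\alpha_i\Gamma^\beta_j=\Gamma^\beta_{j+1}\Gamma^\alpha_i$ ($i<j$), $\Gamma^\alpha_i\Gamma^\alpha_i=\Gamma^\alpha_{i+1}\Gamma^\alpha_i$,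 $\Gamma^\alpha_i\varepsilon_j=\varepsilon_{j+1}\Gamma^\alpha_i$ ($i<j$), $\varepsilon_j\Gamma^\alpha_{i-1}$ ($i>j$), $\Gamma^\alpha_j\varepsilon_j=\varepsilon_{j+1}\varepsilon_j$, $\partial^\alpha_i\Gamma^\beta_j=\Gamma^\beta_{j-1}\partial^\alpha_i$ ($i<j$), $\Gamma^\beta_j\partial^\alpha_{i-1}$ ($i>j+1$), $\partial^\alpha_j\Gamma^\alpha_j=\partial^\alpha_{j+1}\Gamma^\alpha_j=\mathrm{id}$, $\partial^\alpha_j\Gamma^{-\alpha}_j=\partial^\alpha_{j+1}\Gamma^{-\alpha}_j=\varepsilon_j\partial^\alpha_j$; $\partial^-_j(a\circ_jb)=\partial^-_ja$, $\partial^+_j(a\circ_jb)=\partial^+_jb$, $\partial^\alpha_i(a\circ_jb)=\partial^\alpha_ia\circ_{j-1}\partial^\alpha_ib$ ($i<j$), $\partial^\alpha_ia\circ_j\partial^\alpha_ib$ ($i>j$); interchange for $i\ne j$; $\varepsilon_i(a\circ_jb)=\varepsilon_ia\circ_{j+1}\varepsilon_ib$ ($i\le j$), $\varepsilon_ia\circ_j\varepsilon_ib$ ($i>j$); $\Gamma^\alpha_i(a\circ_jb)=\Gamma^\alpha_ia\circ_{j+1}\Gamma^\alpha_ib$ ($i<j$), $\Gamma^\alpha_ia\circ_j\Gamma^\alpha_ib$ ($i>j$); $\Gamma^+_j(a\circ_jb)=(\Gamma^+_ja\circ_j\varepsilon_ja)\circ_{j+1}(\varepsilon_{j+1}a\circ_j\Gamma^+_jb)$,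 $\Gamma^-_j(a\circ_jb)=(\Gamma^-_ja\circ_j\varepsilon_{j+1}b)\circ_{j+1}(\varepsilon_jb\circ_j\Gamma^-_jb)$; each $\circ_j$ is a category structure with identities $\varepsilon_jy$; $\Gamma^+_ix\circ_i\Gamma^-_ix=\varepsilon_{i+1}x$, $\Gamma^+_ix\circ_{i+1}\Gamma^-_ix=\varepsilon_ix$. Folding operations on $G_n$: $\psi_ix=\Gamma^+_i\partial^-_{i+1}x\circ_{i+1}x\circ_{i+1}\Gamma^-_i\partial^+_{i+1}x$ ($1\le i\le n-1$), $\Psi_r=\psi_{r-1}\cdots\psi_1$, $\Phi_n=\Psi_1\Psi_2\cdots\Psi_n$. *)

theory Defs
  imports Main
begin

text \<open>Conventions (alpha :: bool, True = +, False = -):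
  \<^item> cell n            = G_n
  \<^item> face n i a x      = \<partial>^a_i x      for x in G_n, 1 <= i <= n, lands in G_(n-1)
  \<^item> degen n i x       = \<epsilon>_i x        for x in G_n, 1 <= i <= n+1, lands in G_(n+1)
  \<^item> conn n i a x      = \<Gamma>^a_i x      for x in G_n, 1 <= i <= n, lands in G_(n+1)
  \<^item> comp n j a b      = a \<circ>_j b     for a,b in G_n, 1 <= j <= n,
                          defined iff face n j True a = face n j False b\<close>

record 'a cubical =
  cell  :: "nat \<Rightarrow> 'a set"
  face  :: "nat \<Rightarrow> nat \<Rightarrow> bool \<Rightarrow> 'a \<Rightarrow> 'a"
  degen :: "nat \<Rightarrow> nat \<Rightarrow> 'a \<Rightarrow> 'a"
  conn  :: "nat \<Rightarrow> nat \<Rightarrow> bool \<Rightarrow> 'a \<Rightarrow> 'a"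
  comp  :: "nat \<Rightarrow> nat \<Rightarrow> 'a \<Rightarrow> 'a \<Rightarrow> 'a"

definition composable :: "'a cubical \<Rightarrow> nat \<Rightarrow> nat \<Rightarrow> 'a \<Rightarrow> 'a \<Rightarrow> bool" where
  "composable G n j a b \<longleftrightarrow> a \<in> cell G n \<and> b \<in> cell G n \<and> 1 \<le> j \<and> j \<le> n \<and>
     face G n j True a = face G n j False b"

definition cub_closed :: "'a cubical \<Rightarrow> bool" where
  "cub_closed G \<longleftrightarrow>
    (\<forall>n i a x. x \<in> cell G n \<and> 1 \<le> i \<and> i \<le> n \<longrightarrow> face G n i a x \<in> cell G (n - 1)) \<and>
    (\<forall>n i x. x \<in> cell G n \<and> 1 \<le> i \<and> i \<le> Suc n \<longrightarrow> degen G n i x \<in> cell G (Suc n)) \<and>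
    (\<forall>n i a x. x \<in> cell G n \<and> 1 \<le> i \<and> i \<le> n \<longrightarrow> conn G n i a x \<in> cell G (Suc n)) \<and>
    (\<forall>n j a b. composable G n j a b \<longrightarrow> comp G n j a b \<in> cell G n)"

definition cub_face_degen :: "'a cubical \<Rightarrow> bool" where
  "cub_face_degen G \<longleftrightarrow>
    \<comment> \<open>\<partial>^a_i \<partial>^b_j = \<partial>^b_(j-1) \<partial>^a_i, i < j\<close>
    (\<forall>n i j a b x. x \<in> cell G n \<and> 1 \<le> i \<and> i < j \<and> j \<le> n \<longrightarrow>
       face G (n - 1) i a (face G n j b x) = face G (n - 1) (j - 1) b (face G n i a x)) \<and>
    \<comment> \<open>\<epsilon>_i \<epsilon>_j = \<epsilon>_(j+1) \<epsilon>_i, i \<le> j\<close>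
    (\<forall>n i j x. x \<in> cell G n \<and> 1 \<le> i \<and> i \<le> j \<and> j \<le> Suc n \<longrightarrow>
       degen G (Suc n) i (degen G n j x) = degen G (Suc n) (Suc j) (degen G n i x)) \<and>
    \<comment> \<open>\<partial>^a_i \<epsilon>_j\<close>
    (\<forall>n i j a x. x \<in> cell G n \<and> 1 \<le> i \<and> i < j \<and> j \<le> Suc n \<longrightarrow>
       face G (Suc n) i a (degen G n j x) = degen G (n - 1) (j - 1) (face G n i a x)) \<and>
    (\<forall>n i j a x. x \<in> cell G n \<and> 1 \<le> j \<and> j < i \<and> i \<le> Suc n \<longrightarrow>
       face G (Suc n) i a (degen G n j x) = degen G (n - 1) j (face G n (i - 1) a x)) \<and>
    (\<forall>n i a x. x \<in> cell G n \<and> 1 \<le> i \<and> i \<le> Suc n \<longrightarrow>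
       face G (Suc n) i a (degen G n i x) = x)"

definition cub_conn :: "'a cubical \<Rightarrow> bool" where
  "cub_conn G \<longleftrightarrow>
    \<comment> \<open>\<Gamma>^a_i \<Gamma>^b_j = \<Gamma>^b_(j+1) \<Gamma>^a_i, i < j\<close>
    (\<forall>n i j a b x. x \<in> cell G n \<and> 1 \<le> i \<and> i < j \<and> j \<le> n \<longrightarrow>
       conn G (Suc n) i a (conn G n j b x) = conn G (Suc n) (Suc j) b (conn G n i a x)) \<and>
    \<comment> \<open>\<Gamma>^a_i \<Gamma>^a_i = \<Gamma>^a_(i+1) \<Gamma>^a_i\<close>
    (\<forall>n i a x. x \<in> cell G n \<and> 1 \<le> i \<and> i \<le> n \<longrightarrow>
       conn G (Suc n) i a (conn G n i a x) = conn G (Suc n) (Suc i) a (conn G n i a x)) \<and>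
    \<comment> \<open>\<Gamma>^a_i \<epsilon>_j\<close>
    (\<forall>n i j a x. x \<in> cell G n \<and> 1 \<le> i \<and> i < j \<and> j \<le> Suc n \<longrightarrow>
       conn G (Suc n) i a (degen G n j x) = degen G (Suc n) (Suc j) (conn G n i a x)) \<and>
    (\<forall>n i j a x. x \<in> cell G n \<and> 1 \<le> j \<and> j < i \<and> i \<le> Suc n \<longrightarrow>
       conn G (Suc n) i a (degen G n j x) = degen G (Suc n) j (conn G n (i - 1) a x)) \<and>
    (\<forall>n j a x. x \<in> cell G n \<and> 1 \<le> j \<and> j \<le> Suc n \<longrightarrow>
       conn G (Suc n) j a (degen G n j x) = degen G (Suc n) (Suc j) (degen G n j x)) \<and>
    \<comment> \<open>\<partial>^a_i \<Gamma>^b_j\<close>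
    (\<forall>n i j a b x. x \<in> cell G n \<and> 1 \<le> i \<and> i < j \<and> j \<le> n \<longrightarrow>
       face G (Suc n) i a (conn G n j b x) = conn G (n - 1) (j - 1) b (face G n i a x)) \<and>
    (\<forall>n i j a b x. x \<in> cell G n \<and> 1 \<le> j \<and> Suc j < i \<and> i \<le> Suc n \<longrightarrow>
       face G (Suc n) i a (conn G n j b x) = conn G (n - 1) j b (face G n (i - 1) a x)) \<and>
    (\<forall>n j a x. x \<in> cell G n \<and> 1 \<le> j \<and> j \<le> n \<longrightarrow>
       face G (Suc n) j a (conn G n j a x) = x \<and>
       face G (Suc n) (Suc j) a (conn G n j a x) = x) \<and>
    (\<forall>n j a x. x \<in> cell G n \<and> 1 \<le> j \<and> j \<le> n \<longrightarrow>
       face G (Suc n) j a (conn G n j (\<not> a) x) = degen G (n - 1) j (face G n j a x) \<and>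
       face G (Suc n) (Suc j) a (conn G n j (\<not> a) x) = degen G (n - 1) j (face G n j a x))"

definition cub_comp :: "'a cubical \<Rightarrow> bool" where
  "cub_comp G \<longleftrightarrow>
    \<comment> \<open>faces of composites\<close>
    (\<forall>n j a b. composable G n j a b \<longrightarrow>
       face G n j False (comp G n j a b) = face G n j False a \<and>
       face G n j True (comp G n j a b) = face G n j True b) \<and>
    (\<forall>n i j c a b. composable G n j a b \<and> 1 \<le> i \<and> i < j \<longrightarrow>
       face G n i c (comp G n j a b) = comp G (n - 1) (j - 1) (face G n i c a) (face G n i c b)) \<and>
    (\<forall>n i j c a b. composable G n j a b \<and> j < i \<and> i \<le> n \<longrightarrow>
       face G n i c (comp G n j a b) = comp G (n - 1) j (face G n i c a) (face G n i c b)) \<and>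
    \<comment> \<open>interchange, i \<noteq> j\<close>
    (\<forall>n i j a b c d. i \<noteq> j \<and> composable G n i a b \<and> composable G n i c d \<and>
       composable G n j a c \<and> composable G n j b d \<longrightarrow>
       comp G n j (comp G n i a b) (comp G n i c d) = comp G n i (comp G n j a c) (comp G n j b d)) \<and>
    \<comment> \<open>degeneracies of composites\<close>
    (\<forall>n i j a b. composable G n j a b \<and> 1 \<le> i \<and> i \<le> j \<longrightarrow>
       degen G n i (comp G n j a b) = comp G (Suc n) (Suc j) (degen G n i a) (degen G n i b)) \<and>
    (\<forall>n i j a b. composable G n j a b \<and> j < i \<and> i \<le> Suc n \<longrightarrow>
       degen G n i (comp G n j a b) = comp G (Suc n) j (degen G n i a) (degen G n i b)) \<and>
    \<comment> \<open>connections of composites\<close>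
    (\<forall>n i j c a b. composable G n j a b \<and> 1 \<le> i \<and> i < j \<longrightarrow>
       conn G n i c (comp G n j a b) = comp G (Suc n) (Suc j) (conn G n i c a) (conn G n i c b)) \<and>
    (\<forall>n i j c a b. composable G n j a b \<and> j < i \<and> i \<le> n \<longrightarrow>
       conn G n i c (comp G n j a b) = comp G (Suc n) j (conn G n i c a) (conn G n i c b)) \<and>
    (\<forall>n j a b. composable G n j a b \<longrightarrow>
       conn G n j True (comp G n j a b) =
         comp G (Suc n) (Suc j)
           (comp G (Suc n) j (conn G n j True a) (degen G n j a))
           (comp G (Suc n) j (degen G n (Suc j) a) (conn G n j True b))) \<and>
    (\<forall>n j a b. composable G n j a b \<longrightarrow>
       conn G n j False (comp G n j a b) =
         comp G (Suc n) (Suc j)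
           (comp G (Suc n) j (conn G n j False a) (degen G n (Suc j) b))
           (comp G (Suc n) j (degen G n j b) (conn G n j False b))) \<and>
    \<comment> \<open>each \<circ>_j is a category with identities \<epsilon>_j y\<close>
    (\<forall>n j a b c. composable G n j a b \<and> composable G n j b c \<longrightarrow>
       comp G n j (comp G n j a b) c = comp G n j a (comp G n j b c)) \<and>
    (\<forall>n j x. x \<in> cell G n \<and> 1 \<le> j \<and> j \<le> n \<longrightarrow>
       comp G n j (degen G (n - 1) j (face G n j False x)) x = x \<and>
       comp G n j x (degen G (n - 1) j (face G n j True x)) = x) \<and>
    \<comment> \<open>\<Gamma>^+_i x \<circ>_i \<Gamma>^-_i x = \<epsilon>_(i+1) x,  \<Gamma>^+_i x \<circ>_(i+1) \<Gamma>^-_i x = \<epsilon>_i x\<close>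
    (\<forall>n i x. x \<in> cell G n \<and> 1 \<le> i \<and> i \<le> n \<longrightarrow>
       comp G (Suc n) i (conn G n i True x) (conn G n i False x) = degen G n (Suc i) x \<and>
       comp G (Suc n) (Suc i) (conn G n i True x) (conn G n i False x) = degen G n i x)"

definition cubical_omega_cat_conn :: "'a cubical \<Rightarrow> bool" where
  "cubical_omega_cat_conn G \<longleftrightarrow>
     cub_closed G \<and> cub_face_degen G \<and> cub_conn G \<and> cub_comp G"

text \<open>Folding operations. psi_i x = \<Gamma>^+_i \<partial>^-_(i+1) x \<circ>_(i+1) x \<circ>_(i+1) \<Gamma>^-_i \<partial>^+_(i+1) x
  on G_n (1 <= i <= n-1); Psi_r = psi_(r-1) ... psi_1; Phi_n = Psi_1 Psi_2 ... Psi_n.\<close>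

definition psi :: "'a cubical \<Rightarrow> nat \<Rightarrow> nat \<Rightarrow> 'a \<Rightarrow> 'a" where
  "psi G n i x =
     comp G n (Suc i)
       (comp G n (Suc i) (conn G (n - 1) i True (face G n (Suc i) False x)) x)
       (conn G (n - 1) i False (face G n (Suc i) True x))"

definition Psi :: "'a cubical \<Rightarrow> nat \<Rightarrow> nat \<Rightarrow> 'a \<Rightarrow> 'a" where
  "Psi G n r x = foldl (\<lambda>y i. psi G n i y) x [1..<r]"

definition Phi :: "'a cubical \<Rightarrow> nat \<Rightarrow> 'a \<Rightarrow> 'a" where
  "Phi G n x = foldr (\<lambda>r y. Psi G n r y) [1..<Suc n] x"

definition Phi_image :: "'a cubical \<Rightarrow> nat \<Rightarrow> 'a set" where
  "Phi_image G n = Phi G n ` cell G n"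

end

theory Submission
  imports Defs
begin

locale coc =
  fixes G :: "'a cubical"
  assumes ax: "cubical_omega_cat_conn G"
begin

lemma AX: "cub_closed G" "cub_face_degen G" "cub_conn G" "cub_comp G"
  using ax unfolding cubical_omega_cat_conn_def by auto

lemma face_cell: "x \<in> cell G n \<Longrightarrow> 1 \<le> i \<Longrightarrow> i \<le> n \<Longrightarrow> face G n i a x \<in> cell G (n - 1)"
  using AX(1) unfolding cub_closed_def by (elim conjE) (blast | simp (no_asm_simp))
lemma degen_cell: "x \<in> cell G n \<Longrightarrow> 1 \<le> i \<Longrightarrow> i \<le> Suc n \<Longrightarrow> degen G n i x \<in> cell G (Suc n)"
  using AX(1) unfolding cub_closed_def by (elim conjE) (blast | simp (no_asm_simp))
lemma conn_cell: "x \<in> cell G n \<Longrightarrow> 1 \<le> i \<Longrightarrow> i \<le> n \<Longrightarrow> conn G n i a x \<in> cell G (Suc n)"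
  using AX(1) unfolding cub_closed_def by (elim conjE) (blast | simp (no_asm_simp))
lemma comp_cell: "composable G n j a b \<Longrightarrow> comp G n j a b \<in> cell G n"
  using AX(1) unfolding cub_closed_def by (elim conjE) (blast | simp (no_asm_simp))

lemma ff: "x \<in> cell G n \<Longrightarrow> 1 \<le> i \<Longrightarrow> i < j \<Longrightarrow> j \<le> n \<Longrightarrow>
   face G (n - 1) i a (face G n j b x) = face G (n - 1) (j - 1) b (face G n i a x)"
  using AX(2) unfolding cub_face_degen_def by (elim conjE) (blast | simp (no_asm_simp))
lemma dd: "x \<in> cell G n \<Longrightarrow> 1 \<le> i \<Longrightarrow> i \<le> j \<Longrightarrow> j \<le> Suc n \<Longrightarrow>
   degen G (Suc n) i (degen G n j x) = degen G (Suc n) (Suc j) (degen G n i x)"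
  using AX(2) unfolding cub_face_degen_def by (elim conjE) (blast | simp (no_asm_simp))
lemma fd_lt: "x \<in> cell G n \<Longrightarrow> 1 \<le> i \<Longrightarrow> i < j \<Longrightarrow> j \<le> Suc n \<Longrightarrow>
   face G (Suc n) i a (degen G n j x) = degen G (n - 1) (j - 1) (face G n i a x)"
  using AX(2) unfolding cub_face_degen_def by (elim conjE) (blast | simp (no_asm_simp))
lemma fd_gt: "x \<in> cell G n \<Longrightarrow> 1 \<le> j \<Longrightarrow> j < i \<Longrightarrow> i \<le> Suc n \<Longrightarrow>
   face G (Suc n) i a (degen G n j x) = degen G (n - 1) j (face G n (i - 1) a x)"
  using AX(2) unfolding cub_face_degen_def by (elim conjE) (blast | simp (no_asm_simp))
lemma fd_eq: "x \<in> cell G n \<Longrightarrow> 1 \<le> i \<Longrightarrow> i \<le> Suc n \<Longrightarrow> face G (Suc n) i a (degen G n i x) = x"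
  using AX(2) unfolding cub_face_degen_def by (elim conjE) (blast | simp (no_asm_simp))

lemma cd_eq: "x \<in> cell G n \<Longrightarrow> 1 \<le> j \<Longrightarrow> j \<le> Suc n \<Longrightarrow>
   conn G (Suc n) j a (degen G n j x) = degen G (Suc n) (Suc j) (degen G n j x)"
  using AX(3) unfolding cub_conn_def by (elim conjE) (blast | simp (no_asm_simp))
lemma fc_gt: "x \<in> cell G n \<Longrightarrow> 1 \<le> j \<Longrightarrow> Suc j < i \<Longrightarrow> i \<le> Suc n \<Longrightarrow>
   face G (Suc n) i a (conn G n j b x) = conn G (n - 1) j b (face G n (i - 1) a x)"
  using AX(3) unfolding cub_conn_def by (elim conjE) (blast | simp (no_asm_simp))
lemma fc_same: "x \<in> cell G n \<Longrightarrow> 1 \<le> j \<Longrightarrow> j \<le> n \<Longrightarrow>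
   face G (Suc n) j a (conn G n j a x) = x \<and> face G (Suc n) (Suc j) a (conn G n j a x) = x"
  using AX(3) unfolding cub_conn_def by (elim conjE) (blast | simp (no_asm_simp))
lemma fc_opp: "x \<in> cell G n \<Longrightarrow> 1 \<le> j \<Longrightarrow> j \<le> n \<Longrightarrow>
   face G (Suc n) (Suc j) a (conn G n j (\<not> a) x) = degen G (n - 1) j (face G n j a x)"
  using AX(3) unfolding cub_conn_def by (elim conjE) (blast | simp (no_asm_simp))

lemma cf_lo: "composable G n j a b \<Longrightarrow> face G n j False (comp G n j a b) = face G n j False a"
  using AX(4) unfolding cub_comp_def by (elim conjE) (blast | simp (no_asm_simp))
lemma cf_hi: "composable G n j a b \<Longrightarrow> face G n j True (comp G n j a b) = face G n j True b"
  using AX(4) unfolding cub_comp_def by (elim conjE) (blast | simp (no_asm_simp))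
lemma cf_lt: "composable G n j a b \<Longrightarrow> 1 \<le> i \<Longrightarrow> i < j \<Longrightarrow>
   face G n i c (comp G n j a b) = comp G (n - 1) (j - 1) (face G n i c a) (face G n i c b)"
  using AX(4) unfolding cub_comp_def by (elim conjE) (blast | simp (no_asm_simp))
lemma cf_gt: "composable G n j a b \<Longrightarrow> j < i \<Longrightarrow> i \<le> n \<Longrightarrow>
   face G n i c (comp G n j a b) = comp G (n - 1) j (face G n i c a) (face G n i c b)"
  using AX(4) unfolding cub_comp_def by (elim conjE) (blast | simp (no_asm_simp))
lemma dc_le: "composable G n j a b \<Longrightarrow> 1 \<le> i \<Longrightarrow> i \<le> j \<Longrightarrow>
   degen G n i (comp G n j a b) = comp G (Suc n) (Suc j) (degen G n i a) (degen G n i b)"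
  using AX(4) unfolding cub_comp_def by (elim conjE) (blast | simp (no_asm_simp))
lemma id_lr: "\<forall>n j x. x \<in> cell G n \<and> 1 \<le> j \<and> j \<le> n \<longrightarrow>
       comp G n j (degen G (n - 1) j (face G n j False x)) x = x \<and>
       comp G n j x (degen G (n - 1) j (face G n j True x)) = x"
  using AX(4) unfolding cub_comp_def by (elim conjE) assumption
lemma id_l: "x \<in> cell G n \<Longrightarrow> 1 \<le> j \<Longrightarrow> j \<le> n \<Longrightarrow>
   comp G n j (degen G (n - 1) j (face G n j False x)) x = x"
  using id_lr by blast
lemma id_r: "x \<in> cell G n \<Longrightarrow> 1 \<le> j \<Longrightarrow> j \<le> n \<Longrightarrow>
   comp G n j x (degen G (n - 1) j (face G n j True x)) = x"
  using id_lr by blast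


lemma composable_face_lt: assumes "composable G n j a b" "1 \<le> i" "i < j"
  shows "composable G (n - 1) (j - 1) (face G n i c a) (face G n i c b)"
proof -
  have c: "a \<in> cell G n" "b \<in> cell G n" "j \<le> n" "face G n j True a = face G n j False b"
    using assms(1) unfolding composable_def by auto
  have "face G (n - 1) (j - 1) True (face G n i c a) = face G (n - 1) i c (face G n j True a)"
    using ff[OF c(1) assms(2,3) c(3), of c True] by simp
  also have "\<dots> = face G (n - 1) (j - 1) False (face G n i c b)"
    using ff[OF c(2) assms(2,3) c(3), of c False] c(4) by simp
  finally show ?thesis unfolding composable_def
    using face_cell c assms by auto
qed

lemma composable_face_gt: assumes "composable G n j a b" "j < i" "i \<le> n"
  shows "composable G (n - 1) j (face G n i c a) (face G n i c b)"
proof -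
  have c: "a \<in> cell G n" "b \<in> cell G n" "1 \<le> j" "face G n j True a = face G n j False b"
    using assms(1) unfolding composable_def by auto
  have "face G (n - 1) j True (face G n i c a) = face G (n - 1) (i - 1) c (face G n j True a)"
    using ff[OF c(1) c(3) assms(2,3), of True c] by simp
  also have "\<dots> = face G (n - 1) j False (face G n i c b)"
    using ff[OF c(2) c(3) assms(2,3), of False c] c(4) by simp
  finally show ?thesis unfolding composable_def
    using face_cell c assms by auto
qed

definition Deg :: "nat \<Rightarrow> nat \<Rightarrow> 'a \<Rightarrow> bool" where
  "Deg p k y \<longleftrightarrow> y \<in> cell G p \<and> k \<le> p \<and>
     (\<forall>l. 1 \<le> l \<and> l \<le> k \<longrightarrow> y = degen G (p - 1) l (face G p l False y))"

lemma Deg0: "Deg p 0 y \<longleftrightarrow> y \<in> cell G p"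
  unfolding Deg_def by auto

lemma Deg_mono: "Deg p k y \<Longrightarrow> k' \<le> k \<Longrightarrow> Deg p k' y"
  unfolding Deg_def by auto

lemma Deg_eq: assumes "Deg p k y" "1 \<le> l" "l \<le> k"
  shows "y = degen G (p - 1) l (face G p l a y)"
proof -
  have y: "y \<in> cell G p" "k \<le> p" and e: "y = degen G (p - 1) l (face G p l False y)"
    using assms unfolding Deg_def by auto
  obtain q where p: "p = Suc q" using assms y by (cases p) auto
  have w: "face G p l False y \<in> cell G q" using face_cell[OF y(1), of l False] assms y p by auto
  show ?thesis
  proof (cases a)
    case True
    have "face G p l True y = face G (Suc q) l True (degen G q l (face G p l False y))"
      using e p by simp
    also have "\<dots> = face G p l False y" using fd_eq[OF w, of l True] assms y p by simp
    finally show ?thesis using e True by simp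
  next
    case False then show ?thesis using e by simp
  qed
qed

lemma Deg_face: assumes "Deg p k y" "1 \<le> i" "i \<le> p"
  shows "Deg (p - 1) (if i \<le> k then k - 1 else k) (face G p i a y)"
proof -
  obtain q where p: "p = Suc q" using assms by (cases p) auto
  have y: "y \<in> cell G p" "k \<le> p" using assms(1) Deg_def by auto
  have fy: "face G p i a y \<in> cell G q" using face_cell[OF y(1) assms(2,3)] p by simp
  show ?thesis unfolding Deg_def
  proof (intro conjI allI impI)
    show "face G p i a y \<in> cell G (p - 1)" using fy p by simp
    show "(if i \<le> k then k - 1 else k) \<le> p - 1" using y assms by auto
    fix l assume l: "1 \<le> l \<and> l \<le> (if i \<le> k then k - 1 else k)"
    show "face G p i a y = degen G (p - 1 - 1) l (face G (p - 1) l False (face G p i a y))"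
    proof (cases "l < i")
      case True
      have lk: "l \<le> k" using l True by (auto split: if_splits)
      define w where "w = face G p l False y"
      have w: "w \<in> cell G q" using face_cell[OF y(1), of l False] l lk y p w_def by auto
      have "face G p i a y = face G (Suc q) i a (degen G q l w)"
        using Deg_eq[OF assms(1), of l False] l lk p w_def by simp
      also have "\<dots> = degen G (q - 1) l (face G q (i - 1) a w)"
        using fd_gt[OF w, of l i a] l True assms p by simp
      also have "face G q (i - 1) a w = face G q l False (face G p i a y)"
        using ff[OF y(1), of l i False a] l True assms p w_def by simp
      finally show ?thesis using p by simp
    next
      case False
      then have lk: "l + 1 \<le> k" "i \<le> k" using l by (auto split: if_splits)
      define w where "w = face G p (Suc l) False y"
      have w: "w \<in> cell G q" using face_cell[OF y(1), of "Suc l" False] lk y p w_def by auto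
      have "face G p i a y = face G (Suc q) i a (degen G q (Suc l) w)"
        using Deg_eq[OF assms(1), of "Suc l" False] lk p w_def by simp
      also have "\<dots> = degen G (q - 1) l (face G q i a w)"
        using fd_lt[OF w, of i "Suc l" a] False assms lk y p by simp
      also have "face G q i a w = face G q l False (face G p i a y)"
        using ff[OF y(1), of i "Suc l" a False] False assms lk y p w_def by simp
      finally show ?thesis using p by simp
    qed
  qed
qed

lemma Deg_degen: assumes "Deg p k w" "1 \<le> m" "m \<le> Suc p"
  shows "Deg (Suc p) (if m \<le> Suc k then Suc k else k) (degen G p m w)"
proof -
  have w: "w \<in> cell G p" "k \<le> p" using assms(1) Deg_def by auto
  show ?thesis unfolding Deg_def
  proof (intro conjI allI impI)
    show "degen G p m w \<in> cell G (Suc p)" using degen_cell w assms by auto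
    show "(if m \<le> Suc k then Suc k else k) \<le> Suc p" using w by auto
    fix l assume l: "1 \<le> l \<and> l \<le> (if m \<le> Suc k then Suc k else k)"
    show "degen G p m w = degen G (Suc p - 1) l (face G (Suc p) l False (degen G p m w))"
    proof (cases "l = m")
      case True then show ?thesis using fd_eq[OF w(1)] assms by simp
    next
      case False
      show ?thesis
      proof (cases "l < m")
        case True
        have lk: "l \<le> k" using l True by (auto split: if_splits)
        obtain q where p: "p = Suc q" using lk l w by (cases p) auto
        define u where "u = face G p l False w"
        have u: "u \<in> cell G q" using face_cell[OF w(1), of l False] l lk w p u_def by auto
        have "face G (Suc p) l False (degen G p m w) = degen G q (m - 1) u"
          using fd_lt[OF w(1), of l m False] l True assms p u_def by simp
        moreover have "degen G p l (degen G q (m - 1) u) = degen G p m (degen G q l u)"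
          using dd[OF u, of l "m - 1"] l True assms p by simp
        moreover have "degen G q l u = w" using Deg_eq[OF assms(1), of l False] l lk p u_def by simp
        ultimately show ?thesis by simp
      next
        case False2: False
        then have ml: "m < l" using False by simp
        have lk: "l - 1 \<le> k" "l \<le> Suc p" using l w by (auto split: if_splits)
        obtain q where p: "p = Suc q" using lk l ml w assms by (cases p) auto
        define u where "u = face G p (l - 1) False w"
        have u: "u \<in> cell G q" using face_cell[OF w(1), of "l - 1" False] l lk ml w p u_def assms by auto
        have "face G (Suc p) l False (degen G p m w) = degen G q m u"
          using fd_gt[OF w(1), of m l False] lk assms ml p u_def by simp
        moreover have "degen G p m (degen G q (l - 1) u) = degen G p l (degen G q m u)"
          using dd[OF u, of m "l - 1"] ml lk assms p by simp
        moreover have "degen G q (l - 1) u = w"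
          using Deg_eq[OF assms(1), of "l - 1" False] l lk ml p u_def assms(2) by simp
        ultimately show ?thesis by simp
      qed
    qed
  qed
qed

lemma Deg_comp_high: assumes "Deg p k a" "Deg p k b" "composable G p m a b" "k < m"
  shows "Deg p k (comp G p m a b)"
proof -
  have c: "a \<in> cell G p" "b \<in> cell G p" "1 \<le> m" "m \<le> p"
    using assms(3) unfolding composable_def by auto
  obtain q where p: "p = Suc q" using c by (cases p) auto
  show ?thesis unfolding Deg_def
  proof (intro conjI allI impI)
    show "comp G p m a b \<in> cell G p" using comp_cell assms by auto
    show "k \<le> p" using assms c by auto
    fix l assume l: "1 \<le> l \<and> l \<le> k"
    have cf: "composable G q (m - 1) (face G p l False a) (face G p l False b)"
      using composable_face_lt[OF assms(3), of l False] l assms p by simp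
    have "face G p l False (comp G p m a b) = comp G q (m - 1) (face G p l False a) (face G p l False b)"
      using cf_lt[OF assms(3), of l False] l assms p by simp
    moreover have "degen G q l (comp G q (m - 1) (face G p l False a) (face G p l False b))
       = comp G (Suc q) (Suc (m - 1)) (degen G q l (face G p l False a)) (degen G q l (face G p l False b))"
      proof -
      have lm: "l \<le> m - 1" using l assms(4) by linarith
      show ?thesis using dc_le[OF cf, of l] l lm by simp
    qed
    moreover have "degen G q l (face G p l False a) = a" "degen G q l (face G p l False b) = b"
      using Deg_eq[OF assms(1), of l False] Deg_eq[OF assms(2), of l False] l p by auto
    ultimately show "comp G p m a b = degen G (p - 1) l (face G p l False (comp G p m a b))"
      using p c by simp
  qed
qed

lemma Deg_comp_low: assumes "Deg p k a" "composable G p m a b" "1 \<le> m" "m \<le> k"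
  shows "comp G p m a b = b"
proof -
  have c: "a \<in> cell G p" "b \<in> cell G p" "m \<le> p" "face G p m True a = face G p m False b"
    using assms(2) unfolding composable_def by auto
  have "a = degen G (p - 1) m (face G p m False b)"
    using Deg_eq[OF assms(1) assms(3,4), of True] c by simp
  then show ?thesis using id_l[OF c(2) assms(3) c(3)] by simp
qed


lemma psi_parts: assumes y: "y \<in> cell G n" and i: "1 \<le> i" "Suc i \<le> n"
  shows "composable G n (Suc i) (conn G (n - 1) i True (face G n (Suc i) False y)) y"
    and "composable G n (Suc i) (comp G n (Suc i) (conn G (n - 1) i True (face G n (Suc i) False y)) y)
           (conn G (n - 1) i False (face G n (Suc i) True y))"
proof -
  obtain q where p: "n = Suc q" using i by (cases n) auto
  have z0: "face G n (Suc i) False y \<in> cell G q" "face G n (Suc i) True y \<in> cell G q"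
    using face_cell[OF y, of "Suc i"] i p by auto
  have A: "conn G q i True (face G n (Suc i) False y) \<in> cell G n"
     "conn G q i False (face G n (Suc i) True y) \<in> cell G n"
    using conn_cell[OF z0(1), of i True] conn_cell[OF z0(2), of i False] i p by auto
  have fA: "face G n (Suc i) True (conn G q i True (face G n (Suc i) False y)) = face G n (Suc i) False y"
    using fc_same[OF z0(1), of i True] i p by simp
  show c1: "composable G n (Suc i) (conn G (n - 1) i True (face G n (Suc i) False y)) y"
    unfolding composable_def using A fA y i p by simp
  have fB: "face G n (Suc i) False (conn G q i False (face G n (Suc i) True y)) = face G n (Suc i) True y"
    using fc_same[OF z0(2), of i False] i p by simp
  show "composable G n (Suc i) (comp G n (Suc i) (conn G (n - 1) i True (face G n (Suc i) False y)) y)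
           (conn G (n - 1) i False (face G n (Suc i) True y))"
    unfolding composable_def using A fB y i p comp_cell[OF c1] cf_hi[OF c1] by simp
qed

lemma psi_cell: "y \<in> cell G n \<Longrightarrow> 1 \<le> i \<Longrightarrow> Suc i \<le> n \<Longrightarrow> psi G n i y \<in> cell G n"
  unfolding psi_def using comp_cell psi_parts by blast

lemma psi_fix: assumes y: "y \<in> cell G n" and i: "1 \<le> i" "Suc i \<le> n"
  and d0: "Deg (n - 1) i (face G n (Suc i) False y)" and d1: "Deg (n - 1) i (face G n (Suc i) True y)"
  shows "psi G n i y = y"
proof -
  obtain q where p: "n = Suc q" using i by (cases n) auto
  obtain r where q: "q = Suc r" using i p by (cases q) auto
  define z0 where "z0 = face G n (Suc i) False y"
  define z1 where "z1 = face G n (Suc i) True y"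
  have z: "z0 \<in> cell G q" "z1 \<in> cell G q"
    using face_cell[OF y, of "Suc i"] i p z0_def z1_def by auto
  have u: "face G q i False z0 \<in> cell G r" "face G q i False z1 \<in> cell G r"
    using face_cell[OF z(1), of i] face_cell[OF z(2), of i] i p q by auto
  have e0: "z0 = degen G r i (face G q i False z0)" using Deg_eq[OF d0, of i False] i p q z0_def by simp
  have e1: "z1 = degen G r i (face G q i False z1)" using Deg_eq[OF d1, of i False] i p q z1_def by simp
  have A: "conn G q i True z0 = degen G q (Suc i) z0"
    using cd_eq[OF u(1), of i True] e0 i p q by simp
  have B: "conn G q i False z1 = degen G q (Suc i) z1"
    using cd_eq[OF u(2), of i False] e1 i p q by simp
  have "psi G n i y = comp G n (Suc i) (comp G n (Suc i) (degen G q (Suc i) z0) y) (degen G q (Suc i) z1)"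
    unfolding psi_def using A B p z0_def z1_def by simp
  also have "comp G n (Suc i) (degen G q (Suc i) z0) y = y"
    using id_l[OF y, of "Suc i"] i p z0_def by simp
  also have "comp G n (Suc i) y (degen G q (Suc i) z1) = y"
    using id_r[OF y, of "Suc i"] i p z1_def by simp
  finally show ?thesis .
qed

lemma psi_face_high: assumes y: "y \<in> cell G n" and i: "1 \<le> i" "Suc i < j" "j \<le> n"
  shows "face G n j a (psi G n i y) = psi G (n - 1) i (face G n j a y)"
proof -
  obtain q where p: "n = Suc q" using i by (cases n) auto
  have c1: "composable G n (Suc i) (conn G (n - 1) i True (face G n (Suc i) False y)) y"
   and c2: "composable G n (Suc i) (comp G n (Suc i) (conn G (n - 1) i True (face G n (Suc i) False y)) y)
           (conn G (n - 1) i False (face G n (Suc i) True y))"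
    using psi_parts[OF y i(1)] i by auto
  have z: "face G n (Suc i) b y \<in> cell G q" for b using face_cell[OF y, of "Suc i" b] i p by auto
  have fA: "face G n j a (conn G q i b (face G n (Suc i) c y)) =
     conn G (q - 1) i b (face G (n - 1) (Suc i) c (face G n j a y))" for b c
  proof -
    have "face G n j a (conn G q i b (face G n (Suc i) c y)) = conn G (q - 1) i b (face G q (j - 1) a (face G n (Suc i) c y))"
      using fc_gt[OF z[of c], of i j a b] i p by simp
    also have "face G q (j - 1) a (face G n (Suc i) c y) = face G (n - 1) (Suc i) c (face G n j a y)"
      using ff[OF y, of "Suc i" j c a] i p by simp
    finally show ?thesis .
  qed
  show ?thesis
    unfolding psi_def
    using cf_gt[OF c2, of j a] cf_gt[OF c1, of j a] fA i p by simp
qed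

lemma psi_face_mid: assumes y: "y \<in> cell G n" and i: "1 \<le> i" "Suc i \<le> n"
  shows "face G n (Suc i) a (psi G n i y) = degen G (n - 2) i (face G (n - 1) i a (face G n (Suc i) a y))"
proof -
  obtain q where p: "n = Suc q" using i by (cases n) auto
  have c1: "composable G n (Suc i) (conn G (n - 1) i True (face G n (Suc i) False y)) y"
   and c2: "composable G n (Suc i) (comp G n (Suc i) (conn G (n - 1) i True (face G n (Suc i) False y)) y)
           (conn G (n - 1) i False (face G n (Suc i) True y))"
    using psi_parts[OF y i] by auto
  have z: "face G n (Suc i) b y \<in> cell G q" for b using face_cell[OF y, of "Suc i" b] i p by auto
  show ?thesis
  proof (cases a)
    case True
    then show ?thesis unfolding psi_def
      using cf_hi[OF c2] fc_opp[OF z[of True], of i True] i p by simp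
  next
    case False
    then show ?thesis unfolding psi_def
      using cf_lo[OF c2] cf_lo[OF c1] fc_opp[OF z[of False], of i False] i p by simp
  qed
qed


definition P :: "nat \<Rightarrow> nat \<Rightarrow> 'a \<Rightarrow> bool" where
  "P n r x \<longleftrightarrow> x \<in> cell G n \<and>
     (\<forall>j a. 1 \<le> j \<and> r \<le> j \<and> j \<le> n \<longrightarrow> Deg (n - 1) (j - 1) (face G n j a x))"

lemma Psi_1: "Psi G n 1 x = x" unfolding Psi_def by simp

lemma Psi_Suc: "1 \<le> r \<Longrightarrow> Psi G n (Suc r) x = psi G n r (Psi G n r x)"
  unfolding Psi_def by simp

lemma Psi_inv: assumes x: "P n (Suc r) x" and r: "r \<le> n"
  shows "i < r \<Longrightarrow> P n (Suc r) (Psi G n (Suc i) x) \<and>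
           (\<forall>a. Deg (n - 1) i (face G n (Suc i) a (Psi G n (Suc i) x)))"
proof (induction i)
  case 0
  have xc: "x \<in> cell G n" using x P_def by auto
  show ?case using x Psi_1[of n x] face_cell[OF xc, of 1] 0 r by (simp add: Deg0)
next
  case (Suc i)
  define y where "y = Psi G n (Suc i) x"
  have IH: "P n (Suc r) y" "\<And>a. Deg (n - 1) i (face G n (Suc i) a y)"
    using Suc y_def by auto
  have yc: "y \<in> cell G n" using IH P_def by auto
  have e: "Psi G n (Suc (Suc i)) x = psi G n (Suc i) y" using Psi_Suc[of "Suc i" n x] y_def by simp
  have si: "Suc (Suc i) \<le> n" using Suc r by auto
  have P1: "P n (Suc r) (psi G n (Suc i) y)"
    unfolding P_def
  proof (intro conjI allI impI)
    show "psi G n (Suc i) y \<in> cell G n" using psi_cell[OF yc _ si] by simp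
    fix j a assume j: "1 \<le> j \<and> Suc r \<le> j \<and> j \<le> n"
    have v: "Deg (n - 1) (j - 1) (face G n j a y)" using IH(1) j P_def by auto
    have vc: "face G n j a y \<in> cell G (n - 1)" using v Deg_def by auto
    have dv: "Deg (n - 1 - 1) (Suc i) (face G (n - 1) (Suc (Suc i)) b (face G n j a y))" for b
    proof -
      have jj: "Suc (Suc i) \<le> j - 1" "1 \<le> Suc (Suc i)" "Suc (Suc i) \<le> n - 1" "Suc i \<le> j - 1 - 1"
        using Suc.prems j by auto
      have "Deg (n - 1 - 1) (j - 1 - 1) (face G (n - 1) (Suc (Suc i)) b (face G n j a y))"
        using Deg_face[OF v jj(2,3), of b] jj(1) by simp
      then show ?thesis using Deg_mono jj(4) by blast
    qed
    have s2: "Suc (Suc i) \<le> n - 1" using Suc.prems j by auto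
    have fx: "psi G (n - 1) (Suc i) (face G n j a y) = face G n j a y"
      using psi_fix[OF vc _ s2 dv dv] by simp
    have "face G n j a (psi G n (Suc i) y) = face G n j a y"
      using psi_face_high[OF yc, of "Suc i" j a] fx Suc j by auto
    then show "Deg (n - 1) (j - 1) (face G n j a (psi G n (Suc i) y))" using v by simp
  qed
  have D: "Deg (n - 1) (Suc i) (face G n (Suc (Suc i)) a (psi G n (Suc i) y))" for a
  proof -
    define m where "m = n - 2"
    have nm: "n = Suc (Suc m)" using si m_def by simp
    have f: "face G (Suc m) (Suc i) a (face G n (Suc (Suc i)) a y) = face G (Suc m) (Suc i) a (face G n (Suc i) a y)"
      using ff[OF yc, of "Suc i" "Suc (Suc i)" a a] si nm by simp
    have d1: "Deg m i (face G (Suc m) (Suc i) a (face G n (Suc i) a y))"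
      using Deg_face[OF IH(2)[of a], of "Suc i" a] si nm by simp
    have d2: "Deg (Suc m) (Suc i) (degen G m (Suc i) (face G (Suc m) (Suc i) a (face G n (Suc i) a y)))"
      using Deg_degen[OF d1, of "Suc i"] si nm by simp
    show ?thesis
      using psi_face_mid[OF yc _ si, of a] si nm f d2 by simp
  qed
  show ?case using P1 D e by simp
qed

lemma Psi_P: assumes x: "P n (Suc r) x" and r: "1 \<le> r" "r \<le> n"
  shows "P n r (Psi G n r x)"
proof (cases r)
  case 0 then show ?thesis using r by simp
next
  case (Suc r')
  show ?thesis
  proof (cases r')
    case 0
    have xc: "x \<in> cell G n" using x P_def by auto
    have D: "Deg (n - 1) (j - 1) (face G n j a x)" if "1 \<le> j" "j \<le> n" for j a
    proof (cases "j = 1")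
      case True then show ?thesis using face_cell[OF xc, of 1 a] that by (simp add: Deg0)
    next
      case False then show ?thesis using x that \<open>r = Suc r'\<close> 0 unfolding P_def by auto
    qed
    show ?thesis using xc D Suc 0 Psi_1[of n x] unfolding P_def by auto
  next
    case (Suc r'')
    have I: "P n (Suc r) (Psi G n (Suc r') x) \<and> (\<forall>a. Deg (n - 1) r' (face G n (Suc r') a (Psi G n (Suc r') x)))"
      using Psi_inv[OF x r(2), of r'] \<open>r = Suc r'\<close> by simp
    show ?thesis unfolding P_def
    proof (intro conjI allI impI)
      show "Psi G n r x \<in> cell G n" using I \<open>r = Suc r'\<close> unfolding P_def by simp
      fix j a assume j: "1 \<le> j \<and> r \<le> j \<and> j \<le> n"
      show "Deg (n - 1) (j - 1) (face G n j a (Psi G n r x))"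
      proof (cases "j = r")
        case True then show ?thesis using I \<open>r = Suc r'\<close> by simp
      next
        case False then show ?thesis using I j \<open>r = Suc r'\<close> unfolding P_def by auto
      qed
    qed
  qed
qed

lemma Phi_P: assumes x: "x \<in> cell G n" shows "P n 1 (Phi G n x)"
proof -
  have "\<forall>s. 1 \<le> s \<longrightarrow> s + d = Suc n \<longrightarrow> P n s (foldr (\<lambda>r y. Psi G n r y) [s..<Suc n] x)" for d
  proof (induction d)
    case 0
    then show ?case using x unfolding P_def by auto
  next
    case (Suc d)
    show ?case
    proof (intro allI impI)
      fix s assume s: "1 \<le> s" "s + Suc d = Suc n"
      have L: "[s..<Suc n] = s # [Suc s..<Suc n]" using s by (simp add: upt_conv_Cons)
      have "P n (Suc s) (foldr (\<lambda>r y. Psi G n r y) [Suc s..<Suc n] x)" using Suc s by auto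
      then show "P n s (foldr (\<lambda>r y. Psi G n r y) [s..<Suc n] x)"
        using Psi_P[of n s] s L by simp
    qed
  qed
  then show ?thesis unfolding Phi_def by auto
qed

lemma foldl_fix: "(\<And>i. i \<in> set L \<Longrightarrow> f x i = x) \<Longrightarrow> foldl f x L = x"
  by (induction L) auto
lemma foldr_fix: "(\<And>r. r \<in> set L \<Longrightarrow> f r x = x) \<Longrightarrow> foldr f L x = x"
  by (induction L) auto

lemma Phi_fix: assumes x: "P n 1 x" shows "Phi G n x = x"
proof -
  have xc: "x \<in> cell G n" using x P_def by auto
  have ps: "psi G n i x = x" if "1 \<le> i" "Suc i \<le> n" for i
    using psi_fix[OF xc that] x that unfolding P_def by auto
  have "Psi G n r x = x" if "r \<le> n" for r
    unfolding Psi_def by (rule foldl_fix) (use ps that in auto)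
  then show ?thesis unfolding Phi_def by (intro foldr_fix) auto
qed

lemma Phi_image_eq: "Phi_image G n = {x. P n 1 x}"
proof
  show "Phi_image G n \<subseteq> {x. P n 1 x}" unfolding Phi_image_def using Phi_P by auto
  show "{x. P n 1 x} \<subseteq> Phi_image G n" unfolding Phi_image_def
  proof
    fix x assume "x \<in> {x. P n 1 x}"
    then have "P n 1 x" by simp
    then show "x \<in> Phi G n ` cell G n" using Phi_fix[of n x] P_def by (metis image_eqI)
  qed
qed


lemma P1_Deg: "P n 1 x \<Longrightarrow> 1 \<le> j \<Longrightarrow> j \<le> n \<Longrightarrow> Deg (n - 1) (j - 1) (face G n j a x)"
  unfolding P_def by auto

lemma P1_cell: "P n 1 x \<Longrightarrow> x \<in> cell G n"
  unfolding P_def by auto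

lemma P1_intro: "x \<in> cell G n \<Longrightarrow> (\<And>j a. 1 \<le> j \<Longrightarrow> j \<le> n \<Longrightarrow> Deg (n - 1) (j - 1) (face G n j a x))
   \<Longrightarrow> P n 1 x"
  unfolding P_def by auto

lemma face_P: assumes x: "P n 1 x" and i: "1 \<le> i" "i \<le> n"
  shows "P (n - 1) 1 (face G n i a x)"
proof (rule P1_intro)
  have xc: "x \<in> cell G n" using P1_cell[OF x] .
  show "face G n i a x \<in> cell G (n - 1)" using face_cell[OF xc i] .
  fix j b assume j: "1 \<le> j" "j \<le> n - 1"
  show "Deg (n - 1 - 1) (j - 1) (face G (n - 1) j b (face G n i a x))"
  proof (cases "i \<le> j")
    case True
    have e: "face G (n - 1) i a (face G n (Suc j) b x) = face G (n - 1) j b (face G n i a x)"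
      using ff[OF xc, of i "Suc j" a b] i j True by simp
    have "Deg (n - 1) j (face G n (Suc j) b x)" using P1_Deg[OF x, of "Suc j" b] j by simp
    from Deg_face[OF this, of i a] i j True
    show ?thesis using e by simp
  next
    case False
    have e: "face G (n - 1) j b (face G n i a x) = face G (n - 1) (i - 1) a (face G n j b x)"
      using ff[OF xc, of j i b a] i j False by simp
    have "Deg (n - 1) (j - 1) (face G n j b x)" using P1_Deg[OF x, of j b] j by simp
    moreover have "1 \<le> i - 1" "i - 1 \<le> n - 1" "\<not> (i - 1 \<le> j - 1)" using i j False by auto
    ultimately have "Deg (n - 1 - 1) (j - 1) (face G (n - 1) (i - 1) a (face G n j b x))"
      using Deg_face[of "n - 1" "j - 1" _ "i - 1" a] by simp
    then show ?thesis using e by simp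
  qed
qed

lemma degen1_P: assumes x: "P n 1 x" shows "P (Suc n) 1 (degen G n 1 x)"
proof (rule P1_intro)
  have xc: "x \<in> cell G n" using P1_cell[OF x] .
  show "degen G n 1 x \<in> cell G (Suc n)" using degen_cell[OF xc] by simp
  fix j b assume j: "1 \<le> j" "j \<le> Suc n"
  show "Deg (Suc n - 1) (j - 1) (face G (Suc n) j b (degen G n 1 x))"
  proof (cases "j = 1")
    case True then show ?thesis using fd_eq[OF xc, of 1 b] xc by (simp add: Deg0)
  next
    case False
    have e: "face G (Suc n) j b (degen G n 1 x) = degen G (n - 1) 1 (face G n (j - 1) b x)"
      using fd_gt[OF xc, of 1 j b] j False by simp
    have "Deg (n - 1) (j - 1 - 1) (face G n (j - 1) b x)" using P1_Deg[OF x, of "j - 1" b] j False by simp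
    from Deg_degen[OF this, of 1]
    have "Deg (Suc (n - 1)) (Suc (j - 1 - 1)) (degen G (n - 1) 1 (face G n (j - 1) b x))" by simp
    then show ?thesis using e j False by (simp add: Suc_diff_Suc)
  qed
qed

lemma degen_face_P: assumes x: "P n 1 x" and i: "1 \<le> i" "i \<le> n"
  shows "P n 1 (degen G (n - 1) i (face G n i a x))"
proof -
  define q where "q = n - 1"
  have nq: "n = Suc q" using i q_def by simp
  define z where "z = face G n i a x"
  have z: "P q 1 z" using face_P[OF x i, of a] z_def q_def by simp
  have zc: "z \<in> cell G q" using P1_cell[OF z] .
  have "P (Suc q) 1 (degen G q i z)"
  proof (rule P1_intro)
    show "degen G q i z \<in> cell G (Suc q)" using degen_cell[OF zc] i nq by simp
    fix j b assume j: "1 \<le> j" "j \<le> Suc q"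
    show "Deg (Suc q - 1) (j - 1) (face G (Suc q) j b (degen G q i z))"
    proof (cases "j = i")
      case True
      have "Deg q (i - 1) z" using P1_Deg[OF x i, of a] z_def q_def by simp
      then show ?thesis using fd_eq[OF zc, of i b] i nq True by simp
    next
      case False
      show ?thesis
      proof (cases "j < i")
        case True
        have e: "face G (Suc q) j b (degen G q i z) = degen G (q - 1) (i - 1) (face G q j b z)"
          using fd_lt[OF zc, of j i b] j True i nq by simp
        have d: "Deg (q - 1) (j - 1) (face G q j b z)" using P1_Deg[OF z, of j b] j True i nq by simp
        have q1: "Suc (q - 1) = q" using True i j nq by simp
        have m1: "1 \<le> i - 1" "i - 1 \<le> Suc (q - 1)" using True j i nq by auto
        have "Deg (Suc (q - 1)) (if i - 1 \<le> Suc (j - 1) then Suc (j - 1) else j - 1)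
                (degen G (q - 1) (i - 1) (face G q j b z))" using Deg_degen[OF d m1] .
        then have "Deg (Suc (q - 1)) (j - 1) (degen G (q - 1) (i - 1) (face G q j b z))"
          by (rule Deg_mono) simp
        then have "Deg q (j - 1) (degen G (q - 1) (i - 1) (face G q j b z))"
          by (simp only: q1)
        then show ?thesis using e by simp
      next
        case False2: False
        then have ij: "i < j" using False by simp
        have e: "face G (Suc q) j b (degen G q i z) = degen G (q - 1) i (face G q (j - 1) b z)"
          using fd_gt[OF zc, of i j b] j ij i by simp
        have d: "Deg (q - 1) (j - 1 - 1) (face G q (j - 1) b z)"
          using P1_Deg[OF z, of "j - 1" b] j ij i by simp
        have q1: "Suc (q - 1) = q" using ij j i by simp
        have ij2: "i \<le> Suc (j - 1 - 1)" using ij i by auto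
        from Deg_degen[OF d, of i] ij j i ij2
        have "Deg (Suc (q - 1)) (Suc (j - 1 - 1)) (degen G (q - 1) i (face G q (j - 1) b z))" by simp
        then show ?thesis using e q1 ij i by (simp add: Suc_diff_Suc)
      qed
    qed
  qed
  then show ?thesis using nq z_def by simp
qed

lemma comp_P: assumes x: "P n 1 x" and y: "P n 1 y" and i: "1 \<le> i" "i \<le> n"
  and c: "face G n i True x = face G n i False y"
  shows "P n 1 (comp G n i x y)"
proof -
  have xc: "x \<in> cell G n" and yc: "y \<in> cell G n" using P1_cell x y by auto
  have cp: "composable G n i x y" unfolding composable_def using xc yc i c by simp
  show ?thesis
  proof (rule P1_intro)
    show "comp G n i x y \<in> cell G n" using comp_cell[OF cp] .
    fix j b assume j: "1 \<le> j" "j \<le> n"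
    show "Deg (n - 1) (j - 1) (face G n j b (comp G n i x y))"
    proof (cases "j = i")
      case True
      then show ?thesis
        using cf_lo[OF cp] cf_hi[OF cp] P1_Deg[OF x j, of b] P1_Deg[OF y j, of b] by (cases b) auto
    next
      case False
      show ?thesis
      proof (cases "j < i")
        case True
        have e: "face G n j b (comp G n i x y) = comp G (n - 1) (i - 1) (face G n j b x) (face G n j b y)"
          using cf_lt[OF cp, of j b] j True by simp
        have cc: "composable G (n - 1) (i - 1) (face G n j b x) (face G n j b y)"
          using composable_face_lt[OF cp, of j b] j True by simp
        show ?thesis using Deg_comp_high[OF P1_Deg[OF x j] P1_Deg[OF y j] cc] True j e by simp
      next
        case False2: False
        then have ij: "i < j" using False by simp
        have e: "face G n j b (comp G n i x y) = comp G (n - 1) i (face G n j b x) (face G n j b y)"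
          using cf_gt[OF cp, of j b] j ij by simp
        have cc: "composable G (n - 1) i (face G n j b x) (face G n j b y)"
          using composable_face_gt[OF cp, of j b] j ij by simp
        have "comp G (n - 1) i (face G n j b x) (face G n j b y) = face G n j b y"
          using Deg_comp_low[OF P1_Deg[OF x j] cc] i ij by simp
        then show ?thesis using e P1_Deg[OF y j] by simp
      qed
    qed
  qed
qed

end

theorem proposition3p7:
  fixes G :: "'a cubical"
  assumes "cubical_omega_cat_conn G"
  shows "(\<forall>n i a x. 1 \<le> i \<and> i \<le> n \<and> x \<in> Phi_image G n \<longrightarrow>
            face G n i a x \<in> Phi_image G (n - 1))
       \<and> (\<forall>n x. x \<in> Phi_image G n \<longrightarrow> degen G n 1 x \<in> Phi_image G (Suc n))
       \<and> (\<forall>n i a x. 1 \<le> i \<and> i \<le> n \<and> x \<in> Phi_image G n \<longrightarrow>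
            degen G (n - 1) i (face G n i a x) \<in> Phi_image G n)
       \<and> (\<forall>n i x y. 1 \<le> i \<and> i \<le> n \<and> x \<in> Phi_image G n \<and> y \<in> Phi_image G n \<and>
            face G n i True x = face G n i False y \<longrightarrow>
            comp G n i x y \<in> Phi_image G n)"
proof -
  interpret coc G by (rule coc.intro[OF assms])
  show ?thesis unfolding Phi_image_eq
    using face_P degen1_P degen_face_P comp_P by auto
qed

end
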